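(* Let $P$ be a continuous $L$-ordered set. Then ${\rm pt}_L\sigma_L(P)$, with its spectral $L$-topology, is a locally super-compact $L$-sober space.
   Context: $L$ is a frame with implication $\to$. $L$-subsets: maps to $L$; nonempty: $\bigvee A=1$; ${\rm sub}_X(A,B)=\bigwedge_xA(x)\to B(x)$. $L$-topology: $\mathcal O(X)\subseteq L^X$ closed under finite meets and arbitrary joins containing all constants $a_X$; interior $A^\circ$ = join of open sets below $A$. Super-compact: nonempty $A$ with ${\rm sub}_X(A,\bigvee_iV_i)=\bigvee_i{\rm sub}_X(A,V_i)$ for all families of open $V_i$; ${\rm SC}(X)$ their set. Locally super-compact: each open $A=\bigvee_{B\in{\rm SC}(X)}{\rm sub}_X(B,A)\wedge B^\circ$. A point of $\mathcal O(X)$: $p:\mathcal O(X)\to L$ preserving binary meets and arbitrary joins with $p(\lambda_X)=\lambda$; $[x](A)=A(x)$; $L$-sober: $x\mapsto[x]$ bijective onto the points. ${\rm pt}_L\mathcal O(X)$: the set of points with spectral $L$-topology $\{\phi(A):A\in\mathcal O(X)\}$, $\phi(A)(p)=p(A)$. $L$-order $e$ on $P$: $e(x,x)=1$, $e(x,y)\wedge e(y,z)\le e(x,z)$, $e(x,y)\wedge e(y,x)=1\Rightarrow x=y$. ${\downarrow}y(x)=e(x,y)$; $\sqcup A=x$ iff $e(x,y)={\rm sub}_P(A,{\downarrow}y)$ for all $y$; directed: nonempty and $D(x)\wedge D(y)\le\bigvee_zD(z)\wedge e(x,z)\wedge e(y,z)$; ideal: directed lower set; ${\Downarrow}x(y)=\bigwedge\{e(x,\sqcup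 I)\to I(y):I\text{ ideal with a supremum}\}$; continuous $L$-ordered set: each ${\Downarrow}x$ directed with supremum $x$ (not necessarily an $L$-dcpo). $\sigma_L(P)$: upper sets $A$ with $A(\sqcup D)=\bigvee_xA(x)\wedge D(x)$ for every directed $D$ having a supremum. *)

theory Defs
  imports Main
begin

unbundle lattice_syntax

class frame = complete_lattice +
  assumes inf_Sup_frame: "a \<sqinter> Sup S = (SUP b\<in>S. a \<sqinter> b)"

definition limp :: "'l::frame \<Rightarrow> 'l \<Rightarrow> 'l" where
  "limp a b = Sup {c. c \<sqinter> a \<le> b}"

section \<open>L-subsets of a carrier X (functions, equal to bot outside X)\<close>

definition Lext :: "'x set \<Rightarrow> ('x \<Rightarrow> 'l::frame) \<Rightarrow> bool" where
  "Lext X A \<longleftrightarrow> (\<forall>x. x \<notin> X \<longrightarrow> A x = bot)"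

definition constL :: "'x set \<Rightarrow> 'l::frame \<Rightarrow> 'x \<Rightarrow> 'l" where
  "constL X a = (\<lambda>x. if x \<in> X then a else bot)"

definition Lnonempty :: "'x set \<Rightarrow> ('x \<Rightarrow> 'l::frame) \<Rightarrow> bool" where
  "Lnonempty X A \<longleftrightarrow> (SUP x\<in>X. A x) = top"

definition subL :: "'x set \<Rightarrow> ('x \<Rightarrow> 'l::frame) \<Rightarrow> ('x \<Rightarrow> 'l) \<Rightarrow> 'l" where
  "subL X A B = (INF x\<in>X. limp (A x) (B x))"

definition Ltopology :: "'x set \<Rightarrow> ('x \<Rightarrow> 'l::frame) set \<Rightarrow> bool" where
  "Ltopology X T \<longleftrightarrow>
     (\<forall>A\<in>T. Lext X A) \<and>
     (\<forall>a. constL X a \<in> T) \<and>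
     (\<forall>A\<in>T. \<forall>B\<in>T. inf A B \<in> T) \<and>
     (\<forall>S. S \<subseteq> T \<longrightarrow> Sup S \<in> T)"

definition Linterior :: "'x set \<Rightarrow> ('x \<Rightarrow> 'l::frame) set \<Rightarrow> ('x \<Rightarrow> 'l) \<Rightarrow> 'x \<Rightarrow> 'l" where
  "Linterior X T A = Sup {U \<in> T. \<forall>x\<in>X. U x \<le> A x}"

definition superCompact :: "'x set \<Rightarrow> ('x \<Rightarrow> 'l::frame) set \<Rightarrow> ('x \<Rightarrow> 'l) \<Rightarrow> bool" where
  "superCompact X T A \<longleftrightarrow> Lext X A \<and> Lnonempty X A \<and>
     (\<forall>V. V \<subseteq> T \<longrightarrow> subL X A (Sup V) = (SUP U\<in>V. subL X A U))"

definition SC :: "'x set \<Rightarrow> ('x \<Rightarrow> 'l::frame) set \<Rightarrow> ('x \<Rightarrow> 'l) set" where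
  "SC X T = {A. superCompact X T A}"

definition locallySuperCompact :: "'x set \<Rightarrow> ('x \<Rightarrow> 'l::frame) set \<Rightarrow> bool" where
  "locallySuperCompact X T \<longleftrightarrow>
     (\<forall>A\<in>T. A = (SUP B\<in>SC X T. (\<lambda>x. subL X B A \<sqinter> Linterior X T B x)))"

text \<open>A point is a map T(X) -> L, represented as a function that is bot off T(X).\<close>
definition isPoint :: "'x set \<Rightarrow> ('x \<Rightarrow> 'l::frame) set \<Rightarrow> (('x \<Rightarrow> 'l) \<Rightarrow> 'l) \<Rightarrow> bool" where
  "isPoint X T p \<longleftrightarrow>
     (\<forall>A. A \<notin> T \<longrightarrow> p A = bot) \<and>
     (\<forall>A\<in>T. \<forall>B\<in>T. p (inf A B) = p A \<sqinter> p B) \<and>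
     (\<forall>S. S \<subseteq> T \<longrightarrow> p (Sup S) = (SUP A\<in>S. p A)) \<and>
     (\<forall>a. p (constL X a) = a)"

definition evalPt :: "'x set \<Rightarrow> ('x \<Rightarrow> 'l::frame) set \<Rightarrow> 'x \<Rightarrow> (('x \<Rightarrow> 'l) \<Rightarrow> 'l)" where
  "evalPt X T x = (\<lambda>A. if A \<in> T then A x else bot)"

definition Lsober :: "'x set \<Rightarrow> ('x \<Rightarrow> 'l::frame) set \<Rightarrow> bool" where
  "Lsober X T \<longleftrightarrow> bij_betw (evalPt X T) X {p. isPoint X T p}"

definition ptL :: "'x set \<Rightarrow> ('x \<Rightarrow> 'l::frame) set \<Rightarrow> (('x \<Rightarrow> 'l) \<Rightarrow> 'l) set" where
  "ptL X T = {p. isPoint X T p}"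

definition phiL :: "'x set \<Rightarrow> ('x \<Rightarrow> 'l::frame) set \<Rightarrow> ('x \<Rightarrow> 'l) \<Rightarrow> (('x \<Rightarrow> 'l) \<Rightarrow> 'l) \<Rightarrow> 'l" where
  "phiL X T A = (\<lambda>p. if isPoint X T p then p A else bot)"

definition spectralTop :: "'x set \<Rightarrow> ('x \<Rightarrow> 'l::frame) set \<Rightarrow> ((('x \<Rightarrow> 'l) \<Rightarrow> 'l) \<Rightarrow> 'l) set" where
  "spectralTop X T = {phiL X T A | A. A \<in> T}"

section \<open>L-ordered sets (carrier = the whole type 'a)\<close>

definition Lorder :: "('a \<Rightarrow> 'a \<Rightarrow> 'l::frame) \<Rightarrow> bool" where
  "Lorder e \<longleftrightarrow> (\<forall>x. e x x = top) \<and> (\<forall>x y z. e x y \<sqinter> e y z \<le> e x z) \<and>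
     (\<forall>x y. e x y \<sqinter> e y x = top \<longrightarrow> x = y)"

definition downL :: "('a \<Rightarrow> 'a \<Rightarrow> 'l::frame) \<Rightarrow> 'a \<Rightarrow> 'a \<Rightarrow> 'l" where
  "downL e y = (\<lambda>x. e x y)"

definition isSupL :: "('a \<Rightarrow> 'a \<Rightarrow> 'l::frame) \<Rightarrow> ('a \<Rightarrow> 'l) \<Rightarrow> 'a \<Rightarrow> bool" where
  "isSupL e A x \<longleftrightarrow> (\<forall>y. e x y = subL UNIV A (downL e y))"

definition directedL :: "('a \<Rightarrow> 'a \<Rightarrow> 'l::frame) \<Rightarrow> ('a \<Rightarrow> 'l) \<Rightarrow> bool" where
  "directedL e D \<longleftrightarrow> Lnonempty UNIV D \<and>
     (\<forall>x y. D x \<sqinter> D y \<le> (SUP z. D z \<sqinter> e x z \<sqinter> e y z))"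

definition lowerL :: "('a \<Rightarrow> 'a \<Rightarrow> 'l::frame) \<Rightarrow> ('a \<Rightarrow> 'l) \<Rightarrow> bool" where
  "lowerL e A \<longleftrightarrow> (\<forall>x y. A x \<sqinter> e y x \<le> A y)"

definition upperL :: "('a \<Rightarrow> 'a \<Rightarrow> 'l::frame) \<Rightarrow> ('a \<Rightarrow> 'l) \<Rightarrow> bool" where
  "upperL e A \<longleftrightarrow> (\<forall>x y. A x \<sqinter> e x y \<le> A y)"

definition idealL :: "('a \<Rightarrow> 'a \<Rightarrow> 'l::frame) \<Rightarrow> ('a \<Rightarrow> 'l) \<Rightarrow> bool" where
  "idealL e I \<longleftrightarrow> directedL e I \<and> lowerL e I"

definition wayBelowL :: "('a \<Rightarrow> 'a \<Rightarrow> 'l::frame) \<Rightarrow> 'a \<Rightarrow> 'a \<Rightarrow> 'l" where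
  "wayBelowL e x = (\<lambda>y. INF Is\<in>{(I, s). idealL e I \<and> isSupL e I s}.
                          limp (e x (snd Is)) (fst Is y))"

definition continuousLOrd :: "('a \<Rightarrow> 'a \<Rightarrow> 'l::frame) \<Rightarrow> bool" where
  "continuousLOrd e \<longleftrightarrow> Lorder e \<and>
     (\<forall>x. directedL e (wayBelowL e x) \<and> isSupL e (wayBelowL e x) x)"

definition sigmaL :: "('a \<Rightarrow> 'a \<Rightarrow> 'l::frame) \<Rightarrow> ('a \<Rightarrow> 'l) set" where
  "sigmaL e = {A. upperL e A \<and>
     (\<forall>D s. directedL e D \<and> isSupL e D s \<longrightarrow> A s = (SUP x. A x \<sqinter> D x))}"

end

theory Submission
  imports Defs
begin
unbundle lattice_syntax

lemma limp_iff: "(c::'l::frame) \<le> limp a b \<longleftrightarrow> c \<sqinter> a \<le> b"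
proof
  assume "c \<le> limp a b"
  hence "c \<sqinter> a \<le> limp a b \<sqinter> a" by (rule inf_mono) simp
  also have "\<dots> = a \<sqinter> Sup {c. c \<sqinter> a \<le> b}" by (simp add: limp_def inf_commute)
  also have "\<dots> = (SUP c\<in>{c. c \<sqinter> a \<le> b}. a \<sqinter> c)" by (rule inf_Sup_frame)
  also have "\<dots> \<le> b" by (auto intro: SUP_least simp: inf_commute)
  finally show "c \<sqinter> a \<le> b" .
next
  assume "c \<sqinter> a \<le> b" thus "c \<le> limp a b" unfolding limp_def by (auto intro: Sup_upper)
qed

lemma limp_mp: "limp a b \<sqinter> (a::'l::frame) \<le> b"
  using limp_iff by blast

lemma limp_top: "limp top (b::'l::frame) = b"
  by (metis antisym inf_top.right_neutral limp_iff order_refl)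

lemma limp_self: "limp (a::'l::frame) a = top"
  by (rule top_le) (simp add: limp_iff)

lemma inf_SUP_frame: "(a::'l::frame) \<sqinter> (SUP i\<in>I. f i) = (SUP i\<in>I. a \<sqinter> f i)"
  using inf_Sup_frame[of a "f`I"] by (simp add: image_image)

lemma SUP_inf_frame: "(SUP i\<in>I. f i) \<sqinter> (a::'l::frame) = (SUP i\<in>I. f i \<sqinter> a)"
  using inf_SUP_frame[of a f I] by (simp add: inf_commute)

lemma inf3_help: "x \<sqinter> c \<le> y \<Longrightarrow> y \<sqinter> b \<le> z \<Longrightarrow> x \<sqinter> b \<sqinter> c \<le> (z::'a::lattice)"
proof -
  assume h: "x \<sqinter> c \<le> y" "y \<sqinter> b \<le> z"
  have "x \<sqinter> b \<sqinter> c = (x \<sqinter> c) \<sqinter> b" by (simp add: inf_aci)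
  also have "\<dots> \<le> y \<sqinter> b" using h(1) by (rule inf_mono) simp
  finally show ?thesis using h(2) by (rule order_trans)
qed

lemma inf3_help2: "b \<sqinter> c \<le> d \<Longrightarrow> x \<sqinter> d \<le> z \<Longrightarrow> x \<sqinter> b \<sqinter> c \<le> (z::'a::lattice)"
proof -
  assume h: "b \<sqinter> c \<le> d" "x \<sqinter> d \<le> z"
  have "x \<sqinter> b \<sqinter> c = x \<sqinter> (b \<sqinter> c)" by (simp add: inf_aci)
  also have "\<dots> \<le> x \<sqinter> d" using h(1) by (rule inf_mono[rotated]) simp
  finally show ?thesis using h(2) by (rule order_trans)
qed

lemma Lsup_apply: "(Sup S :: 'x \<Rightarrow> 'l::complete_lattice) x = (SUP f\<in>S. f x)"
  by simp

lemma point_mono: "isPoint X T p \<Longrightarrow> A \<in> T \<Longrightarrow> B \<in> T \<Longrightarrow> A \<le> B \<Longrightarrow> p A \<le> p B"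
  unfolding isPoint_def by (metis inf.absorb1 inf.cobounded2)

lemma evalPt_point: assumes T: "Ltopology X T" and p: "p \<in> X"
  shows "isPoint X T (evalPt X T p)"
  unfolding isPoint_def evalPt_def
proof (intro conjI allI ballI impI)
  fix A B assume "A \<in> T" "B \<in> T"
  thus "(if A \<sqinter> B \<in> T then (A \<sqinter> B) p else bot) = (if A \<in> T then A p else bot) \<sqinter> (if B \<in> T then B p else bot)"
    using T unfolding Ltopology_def by auto
next
  fix S assume S: "S \<subseteq> T"
  hence "Sup S \<in> T" using T unfolding Ltopology_def by auto
  moreover have "(SUP A\<in>S. if A \<in> T then A p else bot) = (SUP A\<in>S. A p)"
    using S by (intro SUP_cong) auto
  ultimately show "(if Sup S \<in> T then Sup S p else bot) = (SUP A\<in>S. if A \<in> T then A p else bot)"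
    by simp
next
  fix a
  show "(if constL X a \<in> T then constL X a p else bot) = a"
    using T p unfolding Ltopology_def constL_def by auto
qed auto

locale contL =
  fixes e :: "'a \<Rightarrow> 'a \<Rightarrow> 'l::frame"
  assumes cont: "continuousLOrd e"
begin

abbreviation wb where "wb x y \<equiv> wayBelowL e x y"

lemma e_refl: "e x x = top"
  using cont unfolding continuousLOrd_def Lorder_def by blast

lemma e_trans: "e x y \<sqinter> e y z \<le> e x z"
  using cont unfolding continuousLOrd_def Lorder_def by blast

lemma e_trans': "a \<le> e x y \<Longrightarrow> a \<le> e y z \<Longrightarrow> a \<le> e x z"
  by (meson e_trans le_inf_iff order_trans)

lemma isSup_iff: "isSupL e D s \<Longrightarrow> c \<le> e s y \<longleftrightarrow> (\<forall>d. c \<sqinter> D d \<le> e d y)"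
  unfolding isSupL_def subL_def downL_def by (simp add: le_INF_iff limp_iff)

lemma isSup_ub: "isSupL e D s \<Longrightarrow> D d \<le> e d s"
  using isSup_iff[of D s top s] by (simp add: e_refl)

lemma dir_top: "directedL e D \<Longrightarrow> (SUP x. D x) = top"
  unfolding directedL_def Lnonempty_def by simp

lemma dir_dir: "directedL e D \<Longrightarrow> D x \<sqinter> D y \<le> (SUP z. D z \<sqinter> e x z \<sqinter> e y z)"
  unfolding directedL_def by blast

lemma down_ideal: "idealL e (downL e y)"
  unfolding idealL_def directedL_def lowerL_def Lnonempty_def downL_def
proof (intro conjI allI)
  show "(SUP x. e x y) = top" by (metis (no_types) UNIV_I SUP_upper e_refl top_le)
  fix a b
  have "e a y \<sqinter> e b y \<le> e y y \<sqinter> e a y \<sqinter> e b y" by (simp add: e_refl)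
  also have "\<dots> \<le> (SUP z. e z y \<sqinter> e a z \<sqinter> e b z)" by (rule SUP_upper) simp
  finally show "e a y \<sqinter> e b y \<le> (SUP z. e z y \<sqinter> e a z \<sqinter> e b z)" .
  show "e a y \<sqinter> e b a \<le> e b y" using e_trans[of b a y] by (simp add: inf_commute)
qed

lemma down_sup: "isSupL e (downL e y) y"
  unfolding isSupL_def subL_def downL_def
proof (intro allI antisym)
  fix z
  show "e y z \<le> (INF x. limp (e x y) (e x z))"
    by (auto intro!: INF_greatest simp: limp_iff inf_commute e_trans)
  show "(INF x. limp (e x y) (e x z)) \<le> e y z"
    by (rule order_trans[OF INF_lower[of y]]) (auto simp: e_refl limp_top)
qed

lemma wb_le: "wb y x \<le> e x y"
proof -
  have "wb y x \<le> limp (e y y) (downL e y x)"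
    unfolding wayBelowL_def
    by (rule INF_lower2[of "(downL e y, y)"]) (auto simp: down_ideal down_sup)
  thus ?thesis by (simp add: e_refl limp_top downL_def)
qed

lemma wb_lower: "wb d z \<sqinter> e w z \<le> wb d w"
  unfolding wayBelowL_def
proof (rule INF_greatest)
  fix Is assume "Is \<in> {(I, s). idealL e I \<and> isSupL e I s}"
  then obtain I s where Is: "Is = (I,s)" "idealL e I" by auto
  have "(INF Is\<in>{(I, s). idealL e I \<and> isSupL e I s}. limp (e d (snd Is)) (fst Is z)) \<le> limp (e d s) (I z)"
    by (rule INF_lower2[of "(I,s)"]) (use \<open>Is \<in> _\<close> Is in auto)
  hence "(INF Is\<in>{(I, s). idealL e I \<and> isSupL e I s}. limp (e d (snd Is)) (fst Is z)) \<sqinter> e d s \<le> I z"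
    by (simp add: limp_iff)
  moreover have "I z \<sqinter> e w z \<le> I w" using Is(2) unfolding idealL_def lowerL_def by blast
  ultimately show "(INF Is\<in>{(I, s). idealL e I \<and> isSupL e I s}. limp (e d (snd Is)) (fst Is z)) \<sqinter> e w z
         \<le> limp (e d (snd Is)) (fst Is w)"
    unfolding Is by (simp add: limp_iff) (rule inf3_help)
qed

lemma wb_upper1: "wb d a \<sqinter> e d c \<le> wb c a"
  unfolding wayBelowL_def
proof (rule INF_greatest)
  fix Is assume "Is \<in> {(I, s). idealL e I \<and> isSupL e I s}"
  then obtain I s where Is: "Is = (I,s)" by auto
  have "(INF Is\<in>{(I, s). idealL e I \<and> isSupL e I s}. limp (e d (snd Is)) (fst Is a)) \<le> limp (e d s) (I a)"
    by (rule INF_lower2[of "(I,s)"]) (use \<open>Is \<in> _\<close> Is in auto)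
  hence "(INF Is\<in>{(I, s). idealL e I \<and> isSupL e I s}. limp (e d (snd Is)) (fst Is a)) \<sqinter> e d s \<le> I a"
    by (simp add: limp_iff)
  moreover have "e d c \<sqinter> e c s \<le> e d s" by (rule e_trans)
  ultimately show "(INF Is\<in>{(I, s). idealL e I \<and> isSupL e I s}. limp (e d (snd Is)) (fst Is a)) \<sqinter> e d c
         \<le> limp (e c (snd Is)) (fst Is a)"
    unfolding Is by (simp add: limp_iff) (rule inf3_help2)
qed

lemma wb_dir: "directedL e (wb c)" and wb_sup: "isSupL e (wb c) c"
  using cont unfolding continuousLOrd_def by auto

lemma interp:
  assumes D: "directedL e D" "isSupL e D s"
  shows "wb s x \<le> (SUP d. D d \<sqinter> wb d x)"
proof -
  define I where "I = (\<lambda>z. SUP d. D d \<sqinter> wb d z)"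
  have Iapp: "I z = (SUP d. D d \<sqinter> wb d z)" for z unfolding I_def ..
  have Iub: "D d \<sqinter> wb d z \<le> I z" for d z unfolding I_def by (rule SUP_upper) simp
  have low: "lowerL e I"
    unfolding lowerL_def
  proof (intro allI)
    fix x y
    have "I x \<sqinter> e y x = (SUP d. D d \<sqinter> wb d x \<sqinter> e y x)" unfolding I_def by (rule SUP_inf_frame)
    also have "\<dots> \<le> I y" unfolding I_def
    proof (rule SUP_mono)
      fix d
      have "D d \<sqinter> wb d x \<sqinter> e y x \<le> D d \<sqinter> wb d y"
        using wb_lower[of d x y] by (auto simp: inf_assoc intro: le_infI2)
      thus "\<exists>m\<in>UNIV. D d \<sqinter> wb d x \<sqinter> e y x \<le> D m \<sqinter> wb m y" by blast
    qed
    finally show "I x \<sqinter> e y x \<le> I y" .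
  qed
  have ne: "(SUP z. I z) = top"
  proof -
    have "(SUP z. I z) = (SUP d. SUP z. D d \<sqinter> wb d z)" unfolding I_def by (rule SUP_commute)
    also have "\<dots> = (SUP d. D d \<sqinter> (SUP z. wb d z))" by (simp add: inf_SUP_frame)
    also have "\<dots> = (SUP d. D d)" using dir_top[OF wb_dir] by simp
    also have "\<dots> = top" using dir_top[OF D(1)] .
    finally show ?thesis .
  qed
  have dir: "I a \<sqinter> I b \<le> (SUP z. I z \<sqinter> e a z \<sqinter> e b z)" for a b
  proof -
    let ?R = "(SUP z. I z \<sqinter> e a z \<sqinter> e b z)"
    have "I a \<sqinter> I b = (SUP d. D d \<sqinter> wb d a \<sqinter> I b)" unfolding Iapp[of a] by (rule SUP_inf_frame)
    also have "\<dots> \<le> ?R"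
    proof (rule SUP_least)
      fix d
      have "D d \<sqinter> wb d a \<sqinter> I b = (SUP d'. D d \<sqinter> wb d a \<sqinter> (D d' \<sqinter> wb d' b))"
        unfolding Iapp[of b] by (rule inf_SUP_frame)
      also have "\<dots> \<le> ?R"
      proof (rule SUP_least)
        fix d'
        have "D d \<sqinter> wb d a \<sqinter> (D d' \<sqinter> wb d' b) = (D d \<sqinter> D d') \<sqinter> (wb d a \<sqinter> wb d' b)"
          by (simp add: inf_aci)
        also have "\<dots> \<le> (SUP c. D c \<sqinter> e d c \<sqinter> e d' c) \<sqinter> (wb d a \<sqinter> wb d' b)"
          by (rule inf_mono[OF dir_dir[OF D(1)] order_refl])
        also have "\<dots> = (SUP c. D c \<sqinter> e d c \<sqinter> e d' c \<sqinter> (wb d a \<sqinter> wb d' b))"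
          by (rule SUP_inf_frame)
        also have "\<dots> \<le> ?R"
        proof (rule SUP_least)
          fix c
          have "D c \<sqinter> e d c \<sqinter> e d' c \<sqinter> (wb d a \<sqinter> wb d' b) \<le> D c \<sqinter> (wb c a \<sqinter> wb c b)"
          proof -
            let ?X = "D c \<sqinter> e d c \<sqinter> e d' c \<sqinter> (wb d a \<sqinter> wb d' b)"
            have "?X \<le> wb d a \<sqinter> e d c" by (simp add: le_infI1 le_infI2)
            hence 1: "?X \<le> wb c a" using wb_upper1[of d a c] by (rule order_trans)
            have "?X \<le> wb d' b \<sqinter> e d' c" by (simp add: le_infI1 le_infI2)
            hence 2: "?X \<le> wb c b" using wb_upper1[of d' b c] by (rule order_trans)
            have 3: "?X \<le> D c" by (simp add: le_infI1)
            from 1 2 3 show ?thesis by simp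
          qed
          also have "\<dots> \<le> D c \<sqinter> (SUP z. wb c z \<sqinter> e a z \<sqinter> e b z)"
            by (rule inf_mono[OF order_refl dir_dir[OF wb_dir]])
          also have "\<dots> = (SUP z. D c \<sqinter> (wb c z \<sqinter> e a z \<sqinter> e b z))" by (rule inf_SUP_frame)
          also have "\<dots> \<le> ?R"
          proof (rule SUP_mono)
            fix z
            have "D c \<sqinter> (wb c z \<sqinter> e a z \<sqinter> e b z) = (D c \<sqinter> wb c z) \<sqinter> e a z \<sqinter> e b z"
              by (simp add: inf_aci)
            also have "\<dots> \<le> I z \<sqinter> e a z \<sqinter> e b z" using Iub[of c z] by (intro inf_mono) auto
            finally show "\<exists>m\<in>UNIV. D c \<sqinter> (wb c z \<sqinter> e a z \<sqinter> e b z) \<le> I m \<sqinter> e a m \<sqinter> e b m" by blast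
          qed
          finally show "D c \<sqinter> e d c \<sqinter> e d' c \<sqinter> (wb d a \<sqinter> wb d' b) \<le> ?R" .
        qed
        finally show "D d \<sqinter> wb d a \<sqinter> (D d' \<sqinter> wb d' b) \<le> ?R" .
      qed
      finally show "D d \<sqinter> wb d a \<sqinter> I b \<le> ?R" .
    qed
    finally show ?thesis .
  qed
  have ideal: "idealL e I"
    unfolding idealL_def directedL_def Lnonempty_def
  proof (intro conjI allI)
    show "(SUP x\<in>UNIV. I x) = top" using ne .
    show "I x \<sqinter> I y \<le> (SUP z. I z \<sqinter> e x z \<sqinter> e y z)" for x y by (rule dir)
    show "lowerL e I" by (rule low)
  qed
  have sup: "isSupL e I s"
    unfolding isSupL_def subL_def downL_def
  proof (intro allI antisym)
    fix y
    show "e s y \<le> (INF z. limp (I z) (e z y))"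
    proof (rule INF_greatest, unfold limp_iff)
      fix z
      have "e s y \<sqinter> I z = (SUP d. e s y \<sqinter> (D d \<sqinter> wb d z))" unfolding I_def by (rule inf_SUP_frame)
      also have "\<dots> \<le> e z y"
      proof (rule SUP_least)
        fix d
        have "e s y \<sqinter> (D d \<sqinter> wb d z) \<le> e z d" by (rule order_trans[OF inf_le2 order_trans[OF inf_le2 wb_le]])
        moreover have "e s y \<sqinter> (D d \<sqinter> wb d z) \<le> e d s" by (rule order_trans[OF inf_le2 order_trans[OF inf_le1 isSup_ub[OF D(2)]]])
        moreover have "e s y \<sqinter> (D d \<sqinter> wb d z) \<le> e s y" by simp
        ultimately show "e s y \<sqinter> (D d \<sqinter> wb d z) \<le> e z y" by (rule e_trans'[OF e_trans'])
      qed
      finally show "e s y \<sqinter> I z \<le> e z y" .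
    qed
    let ?c = "(INF z. limp (I z) (e z y))"
    show "?c \<le> e s y"
    proof (rule isSup_iff[OF D(2), THEN iffD2], rule allI)
      fix d
      show "?c \<sqinter> D d \<le> e d y"
      proof (rule isSup_iff[OF wb_sup, THEN iffD2], rule allI)
        fix z
        have "?c \<le> limp (I z) (e z y)" by (rule INF_lower) simp
        hence "?c \<sqinter> I z \<le> e z y" by (simp add: limp_iff)
        moreover have "?c \<sqinter> D d \<sqinter> wb d z \<le> ?c \<sqinter> I z" unfolding inf_assoc by (rule inf_mono[OF order_refl Iub])
        ultimately show "?c \<sqinter> D d \<sqinter> wb d z \<le> e z y" by (rule order_trans[rotated])
      qed
    qed
  qed
  have "wb s x \<le> limp (e s s) (I x)"
    unfolding wayBelowL_def
    by (rule INF_lower2[of "(I, s)"]) (auto simp: ideal sup)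
  thus ?thesis by (simp add: e_refl limp_top I_def)
qed

lemma sigma_iff: "A \<in> sigmaL e \<longleftrightarrow> upperL e A \<and>
     (\<forall>D s. directedL e D \<and> isSupL e D s \<longrightarrow> A s = (SUP x. A x \<sqinter> D x))"
  unfolding sigmaL_def by simp

lemma sigma_le: "A \<in> sigmaL e \<Longrightarrow> directedL e D \<Longrightarrow> isSupL e D s \<Longrightarrow> A x \<sqinter> D x \<le> A s"
  unfolding sigma_iff by (metis (no_types, lifting) SUP_upper UNIV_I)

lemma sigma_const: "(\<lambda>x. a) \<in> sigmaL e"
  unfolding sigma_iff upperL_def
  by (auto simp: inf_SUP_frame[symmetric] dir_top)

lemma sigma_upper: "A \<in> sigmaL e \<Longrightarrow> A x \<sqinter> e x y \<le> A y"
  unfolding sigma_iff upperL_def by blast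

lemma sigma_eq: "A \<in> sigmaL e \<Longrightarrow> directedL e D \<Longrightarrow> isSupL e D s \<Longrightarrow> A s = (SUP x. A x \<sqinter> D x)"
  unfolding sigma_iff by blast

lemma sigma_inf: assumes A: "A \<in> sigmaL e" and B: "B \<in> sigmaL e" shows "A \<sqinter> B \<in> sigmaL e"
  unfolding sigma_iff
proof (intro conjI allI impI)
  show "upperL e (A \<sqinter> B)" unfolding upperL_def
  proof (intro allI)
    fix x y
    have 1: "(A \<sqinter> B) x \<sqinter> e x y \<le> A y"
      by (rule order_trans[OF _ sigma_upper[OF A, of x y]]) (simp add: le_infI1)
    have 2: "(A \<sqinter> B) x \<sqinter> e x y \<le> B y"
      by (rule order_trans[OF _ sigma_upper[OF B, of x y]]) (simp add: le_infI1)
    from 1 2 show "(A \<sqinter> B) x \<sqinter> e x y \<le> (A \<sqinter> B) y" by simp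
  qed
  fix D s assume D: "directedL e D \<and> isSupL e D s"
  hence D1: "directedL e D" and D2: "isSupL e D s" by auto
  show "(A \<sqinter> B) s = (SUP x. (A \<sqinter> B) x \<sqinter> D x)"
  proof (rule antisym)
    have "(A \<sqinter> B) s = (SUP x. A x \<sqinter> D x) \<sqinter> (SUP y. B y \<sqinter> D y)"
      using sigma_eq[OF A D1 D2] sigma_eq[OF B D1 D2] by simp
    also have "\<dots> = (SUP x. A x \<sqinter> D x \<sqinter> (SUP y. B y \<sqinter> D y))"
      by (rule SUP_inf_frame)
    also have "\<dots> = (SUP x. SUP y. A x \<sqinter> D x \<sqinter> (B y \<sqinter> D y))"
      by (simp only: inf_SUP_frame)
    also have "\<dots> \<le> (SUP x. (A \<sqinter> B) x \<sqinter> D x)"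
    proof (intro SUP_least)
      fix x y
      have "A x \<sqinter> D x \<sqinter> (B y \<sqinter> D y) = (D x \<sqinter> D y) \<sqinter> (A x \<sqinter> B y)" by (simp add: inf_aci)
      also have "\<dots> \<le> (SUP z. D z \<sqinter> e x z \<sqinter> e y z) \<sqinter> (A x \<sqinter> B y)"
        by (rule inf_mono[OF dir_dir[OF D1] order_refl])
      also have "\<dots> = (SUP z. D z \<sqinter> e x z \<sqinter> e y z \<sqinter> (A x \<sqinter> B y))" by (rule SUP_inf_frame)
      also have "\<dots> \<le> (SUP x. (A \<sqinter> B) x \<sqinter> D x)"
      proof (rule SUP_mono)
        fix z
        let ?X = "D z \<sqinter> e x z \<sqinter> e y z \<sqinter> (A x \<sqinter> B y)"
        have "?X \<le> A x \<sqinter> e x z" by (simp add: le_infI1 le_infI2)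
        hence 1: "?X \<le> A z" using sigma_upper[OF A, of x z] by (rule order_trans)
        have "?X \<le> B y \<sqinter> e y z" by (simp add: le_infI1 le_infI2)
        hence 2: "?X \<le> B z" using sigma_upper[OF B, of y z] by (rule order_trans)
        have 3: "?X \<le> D z" by (simp add: le_infI1)
        from 1 2 3 have "?X \<le> (A \<sqinter> B) z \<sqinter> D z" by simp
        thus "\<exists>m\<in>UNIV. ?X \<le> (A \<sqinter> B) m \<sqinter> D m" by blast
      qed
      finally show "A x \<sqinter> D x \<sqinter> (B y \<sqinter> D y) \<le> (SUP x. (A \<sqinter> B) x \<sqinter> D x)" .
    qed
    finally show "(A \<sqinter> B) s \<le> (SUP x. (A \<sqinter> B) x \<sqinter> D x)" .
    show "(SUP x. (A \<sqinter> B) x \<sqinter> D x) \<le> (A \<sqinter> B) s"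
    proof (rule SUP_least)
      fix x
      have 1: "(A \<sqinter> B) x \<sqinter> D x \<le> A s"
        by (rule order_trans[OF _ sigma_le[OF A D1 D2, of x]]) (simp add: le_infI1)
      have 2: "(A \<sqinter> B) x \<sqinter> D x \<le> B s"
        by (rule order_trans[OF _ sigma_le[OF B D1 D2, of x]]) (simp add: le_infI1)
      from 1 2 show "(A \<sqinter> B) x \<sqinter> D x \<le> (A \<sqinter> B) s" by simp
    qed
  qed
qed

lemma sigma_Sup: assumes S: "S \<subseteq> sigmaL e" shows "Sup S \<in> sigmaL e"
  unfolding sigma_iff
proof (intro conjI allI impI)
  show "upperL e (Sup S)" unfolding upperL_def
  proof (intro allI)
    fix x y
    have "Sup S x \<sqinter> e x y = (SUP A\<in>S. A x \<sqinter> e x y)" by (simp add: SUP_inf_frame)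
    also have "\<dots> \<le> (SUP A\<in>S. A y)" 
    proof (rule SUP_mono)
      fix A assume "A \<in> S"
      hence "A x \<sqinter> e x y \<le> A y" using S by (auto simp: sigma_iff upperL_def)
      thus "\<exists>m\<in>S. A x \<sqinter> e x y \<le> m y" using \<open>A \<in> S\<close> by blast
    qed
    finally show "Sup S x \<sqinter> e x y \<le> Sup S y" by simp
  qed
  fix D s assume D: "directedL e D \<and> isSupL e D s"
  have "Sup S s = (SUP A\<in>S. A s)" by simp
  also have "\<dots> = (SUP A\<in>S. SUP x. A x \<sqinter> D x)"
    by (rule SUP_cong) (use S D in \<open>auto simp: sigma_iff\<close>)
  also have "\<dots> = (SUP x. SUP A\<in>S. A x \<sqinter> D x)" by (rule SUP_commute)
  also have "\<dots> = (SUP x. Sup S x \<sqinter> D x)" by (simp add: SUP_inf_frame)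
  finally show "Sup S s = (SUP x. Sup S x \<sqinter> D x)" .
qed

lemma sigma_W: "(\<lambda>y. wb y x) \<in> sigmaL e"
  unfolding sigma_iff upperL_def
proof (intro conjI allI impI)
  fix a b show "wb a x \<sqinter> e a b \<le> wb b x" by (rule wb_upper1)
next
  fix D s assume D: "directedL e D \<and> isSupL e D s"
  show "wb s x = (SUP y. wb y x \<sqinter> D y)"
  proof (rule antisym)
    show "wb s x \<le> (SUP y. wb y x \<sqinter> D y)" using interp[of D s x] D by (simp add: inf_commute)
    show "(SUP y. wb y x \<sqinter> D y) \<le> wb s x"
    proof (rule SUP_least)
      fix y
      have "wb y x \<sqinter> D y \<le> wb y x \<sqinter> e y s" using isSup_ub[of D s y] D by (intro inf_mono) auto
      also have "\<dots> \<le> wb s x" by (rule wb_upper1)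
      finally show "wb y x \<sqinter> D y \<le> wb s x" .
    qed
  qed
qed

lemma sigma_decomp: assumes A: "A \<in> sigmaL e"
  shows "A = (SUP x. (\<lambda>y. wb y x) \<sqinter> (\<lambda>y. A x))"
proof (rule ext)
  fix y
  have "A y = (SUP x. A x \<sqinter> wb y x)" using A wb_dir wb_sup unfolding sigma_iff by blast
  also have "\<dots> = (SUP x. ((\<lambda>y. wb y x) \<sqinter> (\<lambda>y. A x)) y)" by (simp add: inf_commute)
  also have "\<dots> = (SUP x. (\<lambda>y. wb y x) \<sqinter> (\<lambda>y. A x)) y" by (rule SUP_apply[symmetric])
  finally show "A y = (SUP x. (\<lambda>y. wb y x) \<sqinter> (\<lambda>y. A x)) y" .
qed

abbreviation "SF \<equiv> sigmaL e"
abbreviation "XP \<equiv> ptL UNIV SF"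
abbreviation "TP \<equiv> spectralTop UNIV SF"

lemma constU: "constL UNIV a = (\<lambda>x. a)" unfolding constL_def by simp

lemma SF_top: "Ltopology UNIV SF"
  unfolding Ltopology_def Lext_def constU
  by (auto simp: sigma_const sigma_inf sigma_Sup)

lemma XP_iff: "p \<in> XP \<longleftrightarrow> isPoint UNIV SF p" unfolding ptL_def by simp

lemma pt_inf: "p \<in> XP \<Longrightarrow> A \<in> SF \<Longrightarrow> B \<in> SF \<Longrightarrow> p (A \<sqinter> B) = p A \<sqinter> p B"
  unfolding XP_iff isPoint_def by blast

lemma pt_Sup: "p \<in> XP \<Longrightarrow> S \<subseteq> SF \<Longrightarrow> p (Sup S) = (SUP A\<in>S. p A)"
  unfolding XP_iff isPoint_def by blast

lemma pt_const: "p \<in> XP \<Longrightarrow> p (\<lambda>x. a) = a"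
  unfolding XP_iff isPoint_def constU by blast

lemma pt_out: "p \<in> XP \<Longrightarrow> A \<notin> SF \<Longrightarrow> p A = bot"
  unfolding XP_iff isPoint_def by blast

lemma pt_mono: "p \<in> XP \<Longrightarrow> A \<in> SF \<Longrightarrow> B \<in> SF \<Longrightarrow> A \<le> B \<Longrightarrow> p A \<le> p B"
  unfolding XP_iff using point_mono[of UNIV SF p A B] by blast

lemma phi_in: "p \<in> XP \<Longrightarrow> phiL UNIV SF A p = p A"
  unfolding phiL_def XP_iff by simp

lemma phi_out: "p \<notin> XP \<Longrightarrow> phiL UNIV SF A p = bot"
  unfolding phiL_def XP_iff by simp

lemma phi_inf: "A \<in> SF \<Longrightarrow> B \<in> SF \<Longrightarrow> phiL UNIV SF (A \<sqinter> B) = phiL UNIV SF A \<sqinter> phiL UNIV SF B"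
  by (rule ext) (case_tac "x \<in> XP", auto simp: phi_in phi_out pt_inf)

lemma phi_Sup: "S \<subseteq> SF \<Longrightarrow> phiL UNIV SF (Sup S) = Sup (phiL UNIV SF ` S)"
  by (rule ext) (case_tac "x \<in> XP", auto simp: phi_in phi_out pt_Sup image_image)

lemma phi_const: "phiL UNIV SF (\<lambda>x. a) = constL XP a"
  by (rule ext) (case_tac "x \<in> XP", auto simp: phi_in phi_out pt_const constL_def)

lemma TP_iff: "U \<in> TP \<longleftrightarrow> (\<exists>A\<in>SF. U = phiL UNIV SF A)"
  unfolding spectralTop_def by auto

lemma TP_top: "Ltopology XP TP"
  unfolding Ltopology_def
proof (intro conjI ballI allI impI)
  fix A assume "A \<in> TP" thus "Lext XP A" unfolding TP_iff Lext_def by (auto simp: phi_out)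
next
  fix a show "constL XP a \<in> TP" unfolding TP_iff using phi_const sigma_const by metis
next
  fix A B assume "A \<in> TP" "B \<in> TP" thus "A \<sqinter> B \<in> TP" unfolding TP_iff
    by (metis phi_inf sigma_inf)
next
  fix S assume S: "S \<subseteq> TP"
  define S' where "S' = {A \<in> SF. phiL UNIV SF A \<in> S}"
  have "phiL UNIV SF ` S' = S"
  proof (intro equalityI subsetI)
    fix U assume "U \<in> S"
    then obtain A where "A \<in> SF" "U = phiL UNIV SF A" using S TP_iff by blast
    thus "U \<in> phiL UNIV SF ` S'" unfolding S'_def using \<open>U \<in> S\<close> by auto
  qed (auto simp: S'_def)
  moreover have "S' \<subseteq> SF" unfolding S'_def by auto
  ultimately show "Sup S \<in> TP" unfolding TP_iff by (metis phi_Sup sigma_Sup)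
qed

lemma sober: "Lsober XP TP"
  unfolding Lsober_def bij_betw_def
proof (intro conjI)
  show "inj_on (evalPt XP TP) XP"
  proof (rule inj_onI)
    fix p p' assume p: "p \<in> XP" "p' \<in> XP" and eq: "evalPt XP TP p = evalPt XP TP p'"
    show "p = p'"
    proof (rule ext)
      fix A show "p A = p' A"
      proof (cases "A \<in> SF")
        case True
        hence "phiL UNIV SF A \<in> TP" unfolding TP_iff by auto
        hence "evalPt XP TP p (phiL UNIV SF A) = p A" "evalPt XP TP p' (phiL UNIV SF A) = p' A"
          using p by (auto simp: evalPt_def phi_in)
        thus ?thesis using eq by simp
      next
        case False thus ?thesis using p by (simp add: pt_out)
      qed
    qed
  qed
  show "evalPt XP TP ` XP = {p. isPoint XP TP p}"
  proof (intro equalityI subsetI)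
    fix q assume "q \<in> evalPt XP TP ` XP" thus "q \<in> {p. isPoint XP TP p}"
      using evalPt_point[OF TP_top] by auto
  next
    fix q assume "q \<in> {p. isPoint XP TP p}"
    hence q: "isPoint XP TP q" by simp
    define p where "p = (\<lambda>A. if A \<in> SF then q (phiL UNIV SF A) else bot)"
    have phiT: "A \<in> SF \<Longrightarrow> phiL UNIV SF A \<in> TP" for A unfolding TP_iff by auto
    have q_inf: "q (U \<sqinter> V) = q U \<sqinter> q V" if "U \<in> TP" "V \<in> TP" for U V
      using q that unfolding isPoint_def by blast
    have q_Sup: "q (Sup S) = (SUP U\<in>S. q U)" if "S \<subseteq> TP" for S
      using q that unfolding isPoint_def by blast
    have q_const: "q (constL XP a) = a" for a
      using q unfolding isPoint_def by blast
    have q_out: "U \<notin> TP \<Longrightarrow> q U = bot" for U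
      using q unfolding isPoint_def by blast
    have pP: "p \<in> XP" unfolding XP_iff isPoint_def
    proof (intro conjI ballI allI impI)
      fix A B assume A: "A \<in> SF" and B: "B \<in> SF"
      have "p (A \<sqinter> B) = q (phiL UNIV SF (A \<sqinter> B))" using sigma_inf[OF A B] by (simp add: p_def)
      also have "\<dots> = q (phiL UNIV SF A \<sqinter> phiL UNIV SF B)" by (simp only: phi_inf[OF A B])
      also have "\<dots> = q (phiL UNIV SF A) \<sqinter> q (phiL UNIV SF B)" by (rule q_inf[OF phiT[OF A] phiT[OF B]])
      also have "\<dots> = p A \<sqinter> p B" using A B by (simp add: p_def)
      finally show "p (A \<sqinter> B) = p A \<sqinter> p B" .
    next
      fix S assume S: "S \<subseteq> SF"
      have "p (Sup S) = q (phiL UNIV SF (Sup S))" using sigma_Sup[OF S] by (simp add: p_def)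
      also have "\<dots> = q (Sup (phiL UNIV SF ` S))" by (simp only: phi_Sup[OF S])
      also have "\<dots> = (SUP U\<in>phiL UNIV SF ` S. q U)" by (rule q_Sup) (use S phiT in blast)
      also have "\<dots> = (SUP A\<in>S. q (phiL UNIV SF A))" by (simp add: image_comp)
      also have "\<dots> = (SUP A\<in>S. p A)" by (rule SUP_cong) (use S in \<open>auto simp: p_def\<close>)
      finally show "p (Sup S) = (SUP A\<in>S. p A)" .
    next
      fix a
      have "p (constL UNIV a) = q (phiL UNIV SF (\<lambda>x. a))" using sigma_const by (simp add: p_def constU)
      also have "\<dots> = a" by (simp only: phi_const q_const)
      finally show "p (constL UNIV a) = a" .
    qed (simp add: p_def)
    have "evalPt XP TP p = q"
    proof (rule ext)
      fix U show "evalPt XP TP p U = q U"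
      proof (cases "U \<in> TP")
        case True
        then obtain A where A: "A \<in> SF" "U = phiL UNIV SF A" unfolding TP_iff by auto
        thus ?thesis unfolding A(2) using pP phiT[OF A(1)] A(1) by (simp add: evalPt_def phi_in p_def)
      next
        case False thus ?thesis using q_out by (simp add: evalPt_def)
      qed
    qed
    thus "q \<in> evalPt XP TP ` XP" using pP by blast
  qed
qed

definition up :: "(('a \<Rightarrow> 'l) \<Rightarrow> 'l) \<Rightarrow> (('a \<Rightarrow> 'l) \<Rightarrow> 'l) \<Rightarrow> 'l" where
  "up q = (\<lambda>r. if r \<in> XP then (INF C\<in>SF. limp (q C) (r C)) else bot)"

lemma up_self: "q \<in> XP \<Longrightarrow> up q q = top"
  unfolding up_def by (simp add: limp_self)

lemma subL_up: assumes q: "q \<in> XP" and U: "U \<in> TP" shows "subL XP (up q) U = U q"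
proof -
  obtain A where A: "A \<in> SF" "U = phiL UNIV SF A" using U TP_iff by blast
  show ?thesis
  proof (rule antisym)
    have "subL XP (up q) U \<le> limp (up q q) (U q)" unfolding subL_def using q by (rule INF_lower)
    thus "subL XP (up q) U \<le> U q" by (simp add: up_self q limp_top)
    show "U q \<le> subL XP (up q) U" unfolding subL_def
    proof (rule INF_greatest)
      fix r assume r: "r \<in> XP"
      have "up q r = (INF C\<in>SF. limp (q C) (r C))" using r by (simp add: up_def)
      also have "\<dots> \<le> limp (q A) (r A)" using A(1) by (rule INF_lower)
      finally have "up q r \<le> limp (q A) (r A)" .
      moreover have "U q = q A" using q A by (simp add: phi_in)
      ultimately have "U q \<sqinter> up q r \<le> q A \<sqinter> limp (q A) (r A)"
        by (simp only:) (rule inf_mono[OF order_refl])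
      also have "\<dots> \<le> r A" using limp_mp by (simp add: inf_commute)
      finally show "U q \<le> limp (up q r) (U r)" using r A by (simp add: limp_iff phi_in)
    qed
  qed
qed

lemma up_SC: assumes q: "q \<in> XP" shows "up q \<in> SC XP TP"
  unfolding SC_def superCompact_def
proof (intro CollectI conjI allI impI)
  show "Lext XP (up q)" unfolding Lext_def up_def by simp
  show "Lnonempty XP (up q)" unfolding Lnonempty_def
    by (metis SUP_upper q top_le up_self)
  fix V assume V: "V \<subseteq> TP"
  hence "Sup V \<in> TP" using TP_top unfolding Ltopology_def by blast
  hence "subL XP (up q) (Sup V) = Sup V q" using q by (simp add: subL_up)
  also have "\<dots> = (SUP U\<in>V. U q)" by simp
  also have "\<dots> = (SUP U\<in>V. subL XP (up q) U)" using V q by (intro SUP_cong) (auto simp: subL_up)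
  finally show "subL XP (up q) (Sup V) = (SUP U\<in>V. subL XP (up q) U)" .
qed

lemma ptx: "evalPt UNIV SF x \<in> XP"
  unfolding XP_iff by (rule evalPt_point[OF SF_top]) simp

lemma lsc: "locallySuperCompact XP TP"
  unfolding locallySuperCompact_def
proof (intro ballI ext)
  fix U r assume U: "U \<in> TP"
  then obtain A where A: "A \<in> SF" "U = phiL UNIV SF A" using TP_iff by blast
  let ?R = "(SUP B\<in>SC XP TP. (\<lambda>x. subL XP B U \<sqinter> Linterior XP TP B x))"
  have R: "?R r = (SUP B\<in>SC XP TP. subL XP B U \<sqinter> Linterior XP TP B r)" by (rule SUP_apply)
  show "U r = ?R r"
  proof (cases "r \<in> XP")
    case False
    have "Linterior XP TP B r = bot" for B
      unfolding Linterior_def Lsup_apply SUP_bot_conv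
    proof
      fix V assume "V \<in> {U \<in> TP. \<forall>x\<in>XP. U x \<le> B x}"
      then obtain C where "V = phiL UNIV SF C" using TP_iff by blast
      thus "V r = bot" using False by (simp add: phi_out)
    qed
    thus ?thesis using False A R by (simp add: phi_out)
  next
    case r: True
    show ?thesis
    proof (rule antisym)
      define W where "W = (\<lambda>x y. wb y x)"
      have WF: "W x \<in> SF" for x unfolding W_def by (rule sigma_W)
      have cF: "(\<lambda>y. c) \<in> SF" for c by (rule sigma_const)
      have "U r = r A" using A r by (simp add: phi_in)
      also have "\<dots> = r (SUP x. W x \<sqinter> (\<lambda>y. A x))"
      proof -
        have eq: "(SUP x. W x \<sqinter> (\<lambda>y. A x)) = A" unfolding W_def by (rule sigma_decomp[OF A(1), symmetric])
        show ?thesis by (simp only: eq)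
      qed
      also have "\<dots> = (SUP G\<in>range (\<lambda>x. W x \<sqinter> (\<lambda>y. A x)). r G)"
      proof (rule pt_Sup[OF r])
        show "range (\<lambda>x. W x \<sqinter> (\<lambda>y. A x)) \<subseteq> SF" using WF cF sigma_inf by blast
      qed
      also have "\<dots> = (SUP x. r (W x \<sqinter> (\<lambda>y. A x)))" by (simp add: image_comp)
      also have "\<dots> = (SUP x. r (W x) \<sqinter> A x)" using r WF cF by (simp add: pt_inf pt_const)
      also have "\<dots> \<le> ?R r" unfolding R
      proof (rule SUP_least)
        fix x
        let ?q = "evalPt UNIV SF x"
        have q: "?q \<in> XP" by (rule ptx)
        have "subL XP (up ?q) U = U ?q" using q U by (rule subL_up)
        also have "\<dots> = A x" using q A by (simp add: phi_in evalPt_def)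
        finally have s: "subL XP (up ?q) U = A x" .
        have WT: "phiL UNIV SF (W x) \<in> TP" using WF TP_iff by blast
        have Wle: "\<forall>r'\<in>XP. phiL UNIV SF (W x) r' \<le> up ?q r'"
        proof
          fix r' assume r': "r' \<in> XP"
          have "r' (W x) \<le> (INF C\<in>SF. limp (?q C) (r' C))"
          proof (rule INF_greatest)
            fix C assume C: "C \<in> SF"
            have le: "W x \<sqinter> (\<lambda>y. C x) \<le> C"
            proof (rule le_funI)
              fix y
              have "wb y x \<sqinter> C x \<le> C x \<sqinter> e x y" using wb_le[of y x] by (auto intro: le_infI2 le_infI1)
              also have "\<dots> \<le> C y" using C unfolding sigma_iff upperL_def by blast
              finally show "(W x \<sqinter> (\<lambda>y. C x)) y \<le> C y" by (simp add: W_def)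
            qed
            have "r' (W x) \<sqinter> C x = r' (W x \<sqinter> (\<lambda>y. C x))" using r' WF cF by (simp add: pt_inf pt_const)
            also have "\<dots> \<le> r' C" using pt_mono[OF r' _ C le] WF cF sigma_inf by blast
            finally show "r' (W x) \<le> limp (?q C) (r' C)" using C by (simp add: limp_iff evalPt_def)
          qed
          thus "phiL UNIV SF (W x) r' \<le> up ?q r'" using r' by (simp add: phi_in up_def)
        qed
        have "r (W x) = phiL UNIV SF (W x) r" using r by (simp add: phi_in)
        also have "\<dots> \<le> Linterior XP TP (up ?q) r" unfolding Linterior_def Lsup_apply
          by (rule SUP_upper) (use WT Wle in blast)
        finally have "r (W x) \<le> Linterior XP TP (up ?q) r" .
        hence "r (W x) \<sqinter> A x \<le> Linterior XP TP (up ?q) r \<sqinter> A x" by (rule inf_mono) simp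
        hence "r (W x) \<sqinter> A x \<le> subL XP (up ?q) U \<sqinter> Linterior XP TP (up ?q) r"
          unfolding s by (simp only: inf_commute)
        also have "\<dots> \<le> (SUP B\<in>SC XP TP. subL XP B U \<sqinter> Linterior XP TP B r)"
          by (rule SUP_upper) (rule up_SC[OF q])
        finally show "r (W x) \<sqinter> A x \<le> (SUP B\<in>SC XP TP. subL XP B U \<sqinter> Linterior XP TP B r)" .
      qed
      finally show "U r \<le> ?R r" .
      show "?R r \<le> U r" unfolding R
      proof (rule SUP_least)
        fix B assume "B \<in> SC XP TP"
        have "Linterior XP TP B r \<le> B r" unfolding Linterior_def Lsup_apply
          by (rule SUP_least) (use r in auto)
        moreover have "subL XP B U \<le> limp (B r) (U r)" unfolding subL_def using r by (rule INF_lower)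
        ultimately have "subL XP B U \<sqinter> Linterior XP TP B r \<le> limp (B r) (U r) \<sqinter> B r"
          by (rule inf_mono[rotated])
        also have "\<dots> \<le> U r" by (rule limp_mp)
        finally show "subL XP B U \<sqinter> Linterior XP TP B r \<le> U r" .
      qed
    qed
  qed
qed

end

theorem proposition6p2:
  fixes e :: "'a \<Rightarrow> 'a \<Rightarrow> 'l::frame"
  assumes "continuousLOrd e"
  shows "Ltopology (ptL UNIV (sigmaL e)) (spectralTop UNIV (sigmaL e))
       \<and> locallySuperCompact (ptL UNIV (sigmaL e)) (spectralTop UNIV (sigmaL e))
       \<and> Lsober (ptL UNIV (sigmaL e)) (spectralTop UNIV (sigmaL e))"
proof -
  interpret contL e by unfold_locales (rule assms)
  show ?thesis using TP_top lsc sober by blast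
qed

end
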